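(* Let arbitrary values $\boldsymbol y^*_n\in\mathbb R^{MN}_+$ ($n\in\mathcal T$) and $u^*_n\in\mathbb R$ ($n\in\mathcal T\setminus\{1\}$) be given. Define $\boldsymbol x^{MS}_1=\lceil\boldsymbol B_{t_1}\boldsymbol y^*_1\rceil$, $\boldsymbol x^{MS}_n=\max_{m\in\mathcal P(n)}\lceil\boldsymbol B_{t_m}\boldsymbol y^*_m\rceil-\max_{m\in\mathcal P(a(n))}\lceil\boldsymbol B_{t_m}\boldsymbol y^*_m\rceil$ for $n\ne1$, $\eta^{MS}_n=\max_{m\in\mathcal C(n)}\{\boldsymbol f_{t_m}^{\mathsf T}\sum_{l\in\mathcal P(m)}\boldsymbol x^{MS}_l+\boldsymbol c_{t_m}^{\mathsf T}\boldsymbol y^*_m-u^*_m\}$ for $n\notin\mathcal L$, $\boldsymbol x^{TS}_1=\lceil\boldsymbol B_{t_1}\boldsymbol y^*_1\rceil$, $\boldsymbol x^{TS}_n=\max_{m\in\mathcal P(n)}\lceil\max_{l\in\mathcal T_{t_m}}\boldsymbol B_{t_l}\boldsymbol y^*_l\rceil-\max_{m\in\mathcal P(a(n))}\lceil\max_{l\in\mathcal T_{t_m}}\boldsymbol B_{t_l}\boldsymbol y^*_l\rceil$ for $n\ne1$, $\eta^{TS}_n=\max_{m\in\mathcal C(n)}\{\boldsymbol f_{t_m}^{\mathsf T}\sum_{l\in\mathcal P(m)}\boldsymbol x^{TS}_l+\boldsymbol c_{t_m}^{\mathsf T}\boldsymbol y^*_m-u^*_m\}$ for $n\notin\mathcal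 L$. Then $(\boldsymbol x^{MS},\eta^{MS})$ is an optimal solution of $\mathbf{SP\text{-}RMS}(\boldsymbol y^*,u^* )$ and $(\boldsymbol x^{TS},\eta^{TS})$ is an optimal solution of $\mathbf{SP\text{-}RTS}(\boldsymbol y^*,u^* )$; consequently $Q^M(\boldsymbol y^*,u^* )=\sum_{n\in\mathcal T}p_n\big(\tilde{\boldsymbol f}_n^{\mathsf T}\sum_{m\in\mathcal P(n)}\boldsymbol x^{MS}_m+\tilde\lambda_n\eta^{MS}_n\big)$ and $Q^T(\boldsymbol y^*,u^* )=\sum_{n\in\mathcal T}p_n\big(\tilde{\boldsymbol f}_n^{\mathsf T}\sum_{m\in\mathcal P(n)}\boldsymbol x^{TS}_m+\tilde\lambda_n\eta^{TS}_n\big)$.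
   Context: Setting. Fix integers $T\ge 2$, $M\ge1$, $N\ge1$. For each period $t$: maintenance costs $f_{ti}\ge 0$ forming $\boldsymbol f_t\in\mathbb R^M$; operational costs $c_{tij}\ge0$ forming $\boldsymbol c_t\in\mathbb R^{MN}$; capacities $h_{ti}>0$. $\boldsymbol B_t\in\mathbb R^{M\times MN}$ is the matrix with $(\boldsymbol B_t\boldsymbol y)_i=\frac1{h_{ti}}\sum_{j=1}^N y_{ij}$. Ceilings and maxima of vectors are taken componentwise. Scenario tree: a finite rooted tree with node set $\mathcal T$ and root $1$, all root-to-leaf paths having $T$ nodes; $\mathcal T_t$ is the set of nodes at depth $t$, $t_n$ the period of node $n$, $\mathcal L=\mathcal T_T$ the leaves, $a(n)$ the parent of $n\ne1$, $\mathcal C(n)$ the children of $n$, $\mathcal P(n)$ the set of nodes on the root-to-$n$ path (inclusive). Node probabilities $p_n>0$ satisfy $\sum_{n\in\mathcal T_t}p_n=1$ and $\sum_{m\in\mathcal C(n)}p_m=p_n$ for $n\notin\mathcal L$. Risk parameters $\lambda_t\in[0,1]$, $\alpha_t\in(0,1)$, $t=2,\ldots,T$. $\tilde{\boldsymbol f}_n=\boldsymbol f_{t_n}$ if $n=1$, else $(1-\lambda_{t_n})\boldsymbol f_{t_n}$; $\tilde\lambda_n=0$ if $n\in\mathcal L$, else $\lambda_{t_n+1}$. $\mathbf{SP\text{-}RMS}(\boldsymbol y^*,u^* )$: minimize $\sum_{n\in\mathcal T}p_n\big(\tilde{\boldsymbol f}_n^{\mathsf T}\sum_{m\in\mathcal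 P(n)}\boldsymbol x_m+\tilde\lambda_n\eta_n\big)$ over $\boldsymbol x_n\in\mathbb Z^M_+$ ($n\in\mathcal T$), $\eta_n\in\mathbb R$ ($n\notin\mathcal L$), subject to $\sum_{m\in\mathcal P(n)}\boldsymbol x_m\ge\boldsymbol B_{t_n}\boldsymbol y^*_n$ for all $n\in\mathcal T$ and $\eta_{a(n)}\ge\boldsymbol f_{t_n}^{\mathsf T}\sum_{m\in\mathcal P(n)}\boldsymbol x_m+\boldsymbol c_{t_n}^{\mathsf T}\boldsymbol y^*_n-u^*_n$ for all $n\ne1$. Its optimal value is $Q^M(\boldsymbol y^*,u^* )$. $\mathbf{SP\text{-}RTS}(\boldsymbol y^*,u^* )$: the same problem with the additional constraints $\boldsymbol x_m=\boldsymbol x_n$ for all $m,n\in\mathcal T_t$, $t=1,\ldots,T$. Its optimal value is $Q^T(\boldsymbol y^*,u^* )$. *)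

theory Defs
  imports Complex_Main
begin

(* Scenario tree: node set Tn (finite), rt, parent function par, period (depth)
   function dep with dep rt = 1, horizon TT.  Vectors in R^M / R^{MN} are
   functions of indices i < M, j < N. *)

definition path :: "('a \<Rightarrow> 'a) \<Rightarrow> ('a \<Rightarrow> nat) \<Rightarrow> 'a \<Rightarrow> 'a set" where
  "path par dep n = (\<lambda>k. (par ^^ k) n) ` {..<dep n}"

definition children :: "'a set \<Rightarrow> 'a \<Rightarrow> ('a \<Rightarrow> 'a) \<Rightarrow> 'a \<Rightarrow> 'a set" where
  "children Tn rt par n = {m \<in> Tn. m \<noteq> rt \<and> par m = n}"

definition level :: "'a set \<Rightarrow> ('a \<Rightarrow> nat) \<Rightarrow> nat \<Rightarrow> 'a set" where
  "level Tn dep t = {n \<in> Tn. dep n = t}"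

definition leaves :: "'a set \<Rightarrow> ('a \<Rightarrow> nat) \<Rightarrow> nat \<Rightarrow> 'a set" where
  "leaves Tn dep TT = level Tn dep TT"

definition scenario_tree :: "'a set \<Rightarrow> 'a \<Rightarrow> ('a \<Rightarrow> 'a) \<Rightarrow> ('a \<Rightarrow> nat) \<Rightarrow> nat \<Rightarrow> bool" where
  "scenario_tree Tn rt par dep TT \<longleftrightarrow>
     finite Tn \<and> rt \<in> Tn \<and> dep rt = 1 \<and>
     (\<forall>n\<in>Tn. 1 \<le> dep n \<and> dep n \<le> TT) \<and>
     (\<forall>n\<in>Tn. n \<noteq> rt \<longrightarrow> par n \<in> Tn \<and> dep n = Suc (dep (par n))) \<and>
     (\<forall>n\<in>Tn. dep n < TT \<longrightarrow> children Tn rt par n \<noteq> {})"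

definition node_probs :: "'a set \<Rightarrow> 'a \<Rightarrow> ('a \<Rightarrow> 'a) \<Rightarrow> ('a \<Rightarrow> nat) \<Rightarrow> nat \<Rightarrow> ('a \<Rightarrow> real) \<Rightarrow> bool" where
  "node_probs Tn rt par dep TT p \<longleftrightarrow>
     (\<forall>n\<in>Tn. p n > 0) \<and>
     (\<forall>t\<in>{1..TT}. (\<Sum>n\<in>level Tn dep t. p n) = 1) \<and>
     (\<forall>n\<in>Tn. n \<notin> leaves Tn dep TT \<longrightarrow> (\<Sum>m\<in>children Tn rt par n. p m) = p n)"

definition Bmat :: "(nat \<Rightarrow> nat \<Rightarrow> real) \<Rightarrow> nat \<Rightarrow> nat \<Rightarrow> (nat \<Rightarrow> nat \<Rightarrow> real) \<Rightarrow> nat \<Rightarrow> real" where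
  "Bmat h N t y i = (1 / h t i) * (\<Sum>j<N. y i j)"

definition cumx :: "('a \<Rightarrow> 'a) \<Rightarrow> ('a \<Rightarrow> nat) \<Rightarrow> ('a \<Rightarrow> nat \<Rightarrow> int) \<Rightarrow> 'a \<Rightarrow> nat \<Rightarrow> int" where
  "cumx par dep x n i = (\<Sum>m\<in>path par dep n. x m i)"

definition ftil :: "'a \<Rightarrow> ('a \<Rightarrow> nat) \<Rightarrow> (nat \<Rightarrow> nat \<Rightarrow> real) \<Rightarrow> (nat \<Rightarrow> real) \<Rightarrow> 'a \<Rightarrow> nat \<Rightarrow> real" where
  "ftil rt dep f lam n i = (if n = rt then f (dep n) i else (1 - lam (dep n)) * f (dep n) i)"

definition lamtil :: "'a set \<Rightarrow> ('a \<Rightarrow> nat) \<Rightarrow> nat \<Rightarrow> (nat \<Rightarrow> real) \<Rightarrow> 'a \<Rightarrow> real" where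
  "lamtil Tn dep TT lam n = (if n \<in> leaves Tn dep TT then 0 else lam (Suc (dep n)))"

definition sp_obj where
  "sp_obj Tn rt par dep TT M p f lam x eta =
     (\<Sum>n\<in>Tn. p n * ((\<Sum>i<M. ftil rt dep f lam n i * of_int (cumx par dep x n i))
                      + lamtil Tn dep TT lam n * eta n))"

definition stage_cost where
  "stage_cost par dep M N f c y u x n =
     (\<Sum>i<M. f (dep n) i * of_int (cumx par dep x n i))
     + (\<Sum>i<M. \<Sum>j<N. c (dep n) i j * y n i j) - u n"

definition feasible_RMS where
  "feasible_RMS Tn rt par dep M N f c h y u x (eta :: 'a \<Rightarrow> real) \<longleftrightarrow>
     (\<forall>n\<in>Tn. \<forall>i<M. x n i \<ge> 0) \<and>
     (\<forall>n\<in>Tn. \<forall>i<M. of_int (cumx par dep x n i) \<ge> Bmat h N (dep n) (y n) i) \<and>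
     (\<forall>n\<in>Tn. n \<noteq> rt \<longrightarrow> eta (par n) \<ge> stage_cost par dep M N f c y u x n)"

definition feasible_RTS where
  "feasible_RTS Tn rt par dep TT M N f c h y u x eta \<longleftrightarrow>
     feasible_RMS Tn rt par dep M N f c h y u x eta \<and>
     (\<forall>t\<in>{1..TT}. \<forall>m\<in>level Tn dep t. \<forall>n\<in>level Tn dep t. \<forall>i<M. x m i = x n i)"

definition optimal_RMS where
  "optimal_RMS Tn rt par dep TT M N p f c h lam y u x eta \<longleftrightarrow>
     feasible_RMS Tn rt par dep M N f c h y u x eta \<and>
     (\<forall>x' eta'. feasible_RMS Tn rt par dep M N f c h y u x' eta' \<longrightarrow>
        sp_obj Tn rt par dep TT M p f lam x eta \<le> sp_obj Tn rt par dep TT M p f lam x' eta')"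

definition optimal_RTS where
  "optimal_RTS Tn rt par dep TT M N p f c h lam y u x eta \<longleftrightarrow>
     feasible_RTS Tn rt par dep TT M N f c h y u x eta \<and>
     (\<forall>x' eta'. feasible_RTS Tn rt par dep TT M N f c h y u x' eta' \<longrightarrow>
        sp_obj Tn rt par dep TT M p f lam x eta \<le> sp_obj Tn rt par dep TT M p f lam x' eta')"

definition QM where
  "QM Tn rt par dep TT M N p f c h lam y u =
     Inf {sp_obj Tn rt par dep TT M p f lam x eta | x eta.
            feasible_RMS Tn rt par dep M N f c h y u x eta}"

definition QT where
  "QT Tn rt par dep TT M N p f c h lam y u =
     Inf {sp_obj Tn rt par dep TT M p f lam x eta | x eta.
            feasible_RTS Tn rt par dep TT M N f c h y u x eta}"

definition xMS where
  "xMS rt par dep h N y n i =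
     (if n = rt then \<lceil>Bmat h N (dep n) (y n) i\<rceil>
      else Max ((\<lambda>m. \<lceil>Bmat h N (dep m) (y m) i\<rceil>) ` path par dep n)
         - Max ((\<lambda>m. \<lceil>Bmat h N (dep m) (y m) i\<rceil>) ` path par dep (par n)))"

definition xTS where
  "xTS Tn rt par dep h N y n i =
     (if n = rt then \<lceil>Bmat h N (dep n) (y n) i\<rceil>
      else Max ((\<lambda>m. \<lceil>Max ((\<lambda>l. Bmat h N (dep l) (y l) i) ` level Tn dep (dep m))\<rceil>) ` path par dep n)
         - Max ((\<lambda>m. \<lceil>Max ((\<lambda>l. Bmat h N (dep l) (y l) i) ` level Tn dep (dep m))\<rceil>) ` path par dep (par n)))"

definition eta_of where
  "eta_of Tn rt par dep TT M N f c y u x n =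
     (if n \<in> leaves Tn dep TT then 0
      else Max ((\<lambda>m. stage_cost par dep M N f c y u x m) ` children Tn rt par n))"

end

theory Submission
  imports Defs
begin


lemma tree_facts:
  assumes "scenario_tree Tn rt par dep TT"
  shows "finite Tn" "rt \<in> Tn" "dep rt = 1" "\<And>n. n \<in> Tn \<Longrightarrow> 1 \<le> dep n \<and> dep n \<le> TT"
    "\<And>n. n \<in> Tn \<Longrightarrow> n \<noteq> rt \<Longrightarrow> par n \<in> Tn \<and> dep n = Suc (dep (par n))"
    "\<And>n. n \<in> Tn \<Longrightarrow> dep n < TT \<Longrightarrow> children Tn rt par n \<noteq> {}"
  using assms unfolding scenario_tree_def by auto

lemma tree_induct:
  assumes tree: "scenario_tree Tn rt par dep TT"
    and n: "n \<in> Tn"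
    and base: "P rt"
    and step: "\<And>n. n \<in> Tn \<Longrightarrow> n \<noteq> rt \<Longrightarrow> P (par n) \<Longrightarrow> P n"
  shows "P n"
proof -
  have "\<forall>n. n \<in> Tn \<longrightarrow> dep n = d \<longrightarrow> P n" for d
  proof (induction d)
    case 0
    show ?case using tree_facts(4)[OF tree] by fastforce
  next
    case (Suc d)
    show ?case
    proof (intro allI impI)
      fix n assume nT: "n \<in> Tn" and dn: "dep n = Suc d"
      show "P n"
      proof (cases "n = rt")
        case True then show ?thesis using base by simp
      next
        case False
        then have "par n \<in> Tn" "dep (par n) = d" using tree_facts(5)[OF tree nT] dn by auto
        then show ?thesis using Suc.IH step[OF nT False] by blast
      qed
    qed
  qed
  then show ?thesis using n by blast
qed

lemma path_rt:
  assumes tree: "scenario_tree Tn rt par dep TT"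
  shows "path par dep rt = {rt}"
  using tree_facts(3)[OF tree] unfolding path_def by (simp add: lessThan_Suc)

lemma path_step:
  assumes tree: "scenario_tree Tn rt par dep TT" and nT: "n \<in> Tn" and nr: "n \<noteq> rt"
  shows "path par dep n = insert n (path par dep (par n))"
proof -
  have d: "dep n = Suc (dep (par n))" using tree_facts(5)[OF tree nT nr] by simp
  have "{..<Suc (dep (par n))} = insert 0 (Suc ` {..<dep (par n)})"
    using lessThan_Suc_eq_insert_0 by blast
  then have "path par dep n = insert n ((\<lambda>k. (par ^^ Suc k) n) ` {..<dep (par n)})"
    unfolding path_def d by (simp add: image_image)
  also have "(\<lambda>k. (par ^^ Suc k) n) = (\<lambda>k. (par ^^ k) (par n))"
    by (simp add: funpow_Suc_right del: funpow.simps)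
  finally show ?thesis unfolding path_def by simp
qed

lemma path_props:
  assumes tree: "scenario_tree Tn rt par dep TT" and nT: "n \<in> Tn"
  shows "path par dep n \<subseteq> Tn \<and> (\<forall>m\<in>path par dep n. dep m \<le> dep n)
         \<and> dep ` path par dep n = {1..dep n} \<and> n \<in> path par dep n" (is "?P n")
proof (rule tree_induct[OF tree nT])
  show "?P rt" using path_rt[OF tree] tree_facts(2,3)[OF tree] by auto
next
  fix n assume n1: "n \<in> Tn" and n2: "n \<noteq> rt" and IH: "?P (par n)"
  have d: "par n \<in> Tn" "dep n = Suc (dep (par n))" using tree_facts(5)[OF tree n1 n2] by auto
  have e: "{1..Suc k} = insert (Suc k) {1..k}" for k by auto
  have I: "path par dep n = insert n (path par dep (par n))" using path_step[OF tree n1 n2] .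
  have a: "path par dep n \<subseteq> Tn" using I n1 IH by auto
  have b: "\<forall>m\<in>path par dep n. dep m \<le> dep n" using I IH d(2) by auto
  have c: "dep ` path par dep n = {1..dep n}"
  proof -
    have "dep ` path par dep n = insert (dep n) (dep ` path par dep (par n))" using I by simp
    also have "\<dots> = insert (Suc (dep (par n))) {1..dep (par n)}" using IH d(2) by simp
    also have "\<dots> = {1..dep n}" using d(2) e by simp
    finally show ?thesis .
  qed
  show "?P n" using a b c I by blast
qed

lemma path_finite: "finite (path par dep n)"
  unfolding path_def by simp

lemma notin_path_par:
  assumes tree: "scenario_tree Tn rt par dep TT" and nT: "n \<in> Tn" and nr: "n \<noteq> rt"
  shows "n \<notin> path par dep (par n)"
proof
  assume "n \<in> path par dep (par n)"
  moreover have "par n \<in> Tn" "dep n = Suc (dep (par n))" using tree_facts(5)[OF tree nT nr] by auto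
  moreover have "\<forall>m\<in>path par dep (par n). dep m \<le> dep (par n)"
    using path_props[OF tree, of "par n"] \<open>par n \<in> Tn\<close> by blast
  ultimately show False by fastforce
qed

lemma cumx_rt:
  assumes tree: "scenario_tree Tn rt par dep TT"
  shows "cumx par dep x rt i = x rt i"
  unfolding cumx_def path_rt[OF tree] by simp

lemma cumx_step:
  assumes tree: "scenario_tree Tn rt par dep TT" and nT: "n \<in> Tn" and nr: "n \<noteq> rt"
  shows "cumx par dep x n i = x n i + cumx par dep x (par n) i"
  unfolding cumx_def path_step[OF tree nT nr]
  using notin_path_par[OF tree nT nr] by (subst sum.insert) (auto simp: path_finite)

lemma level1:
  assumes tree: "scenario_tree Tn rt par dep TT"
  shows "level Tn dep 1 = {rt}"
proof -
  have "n = rt" if "n \<in> Tn" "dep n = 1" for n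
  proof (rule ccontr)
    assume "n \<noteq> rt"
    then have "par n \<in> Tn" "dep n = Suc (dep (par n))" using tree_facts(5)[OF tree that(1)] by auto
    then show False using tree_facts(4)[OF tree, of "par n"] that by auto
  qed
  then show ?thesis unfolding level_def using tree_facts(2,3)[OF tree] by blast
qed

lemma cumx_mono_path:
  assumes tree: "scenario_tree Tn rt par dep TT" and nT: "n \<in> Tn"
    and pos: "\<And>n. n \<in> Tn \<Longrightarrow> x n i \<ge> 0"
  shows "\<forall>m\<in>path par dep n. cumx par dep x m i \<le> cumx par dep x n i" (is "?P n")
proof (rule tree_induct[OF tree nT])
  show "?P rt" using path_rt[OF tree] by auto
next
  fix n assume n1: "n \<in> Tn" and n2: "n \<noteq> rt" and IH: "?P (par n)"
  show "?P n"
  proof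
    fix m assume m: "m \<in> path par dep n"
    have e: "cumx par dep x n i = x n i + cumx par dep x (par n) i" by (rule cumx_step[OF tree n1 n2])
    have xp: "x n i \<ge> 0" by (rule pos[OF n1])
    show "cumx par dep x m i \<le> cumx par dep x n i"
    proof (cases "m = n")
      case True then show ?thesis by simp
    next
      case False
      then have "m \<in> path par dep (par n)" using m path_step[OF tree n1 n2] by blast
      then have "cumx par dep x m i \<le> cumx par dep x (par n) i" using IH by blast
      then show ?thesis using e xp by linarith
    qed
  qed
qed

lemma gen_cum:
  assumes tree: "scenario_tree Tn rt par dep TT"
    and xdef: "\<And>n. n \<in> Tn \<Longrightarrow> x n i = (if n = rt then \<phi> n
        else Max (\<phi> ` path par dep n) - Max (\<phi> ` path par dep (par n)))"
    and phi_nn: "\<And>n. n \<in> Tn \<Longrightarrow> \<phi> n \<ge> 0"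
    and nT: "n \<in> Tn"
  shows "cumx par dep x n i = Max (\<phi> ` path par dep n) \<and> x n i \<ge> 0" (is "?P n")
proof (rule tree_induct[OF tree nT])
  show "?P rt" using xdef[of rt] phi_nn[of rt] tree_facts(2)[OF tree] cumx_rt[OF tree] path_rt[OF tree] by simp
next
  fix n assume n1: "n \<in> Tn" and n2: "n \<noteq> rt" and IH: "?P (par n)"
  have p: "par n \<in> Tn" using tree_facts(5)[OF tree n1 n2] by auto
  have "Max (\<phi> ` path par dep (par n)) \<le> Max (\<phi> ` path par dep n)"
  proof (rule Max_mono)
    show "\<phi> ` path par dep (par n) \<subseteq> \<phi> ` path par dep n"
      unfolding path_step[OF tree n1 n2] by blast
    show "\<phi> ` path par dep (par n) \<noteq> {}" using path_props[OF tree p] by blast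
    show "finite (\<phi> ` path par dep n)" by (rule finite_imageI[OF path_finite])
  qed
  moreover have "x n i = Max (\<phi> ` path par dep n) - Max (\<phi> ` path par dep (par n))"
    using xdef[OF n1] n2 by simp
  moreover have "cumx par dep x (par n) i = Max (\<phi> ` path par dep (par n))"
    using IH by blast
  ultimately show "?P n" using cumx_step[OF tree n1 n2, of x i] by linarith
qed




lemma children_sub: "children Tn rt par n \<subseteq> Tn"
  unfolding children_def by auto

lemma feas_eta:
  assumes tree: "scenario_tree Tn rt par dep TT"
    and xpos: "\<forall>n\<in>Tn. \<forall>i<M. x n i \<ge> 0"
    and xcap: "\<forall>n\<in>Tn. \<forall>i<M. of_int (cumx par dep x n i) \<ge> Bmat h N (dep n) (y n) i"
  shows "feasible_RMS Tn rt par dep M N f c h y u x (eta_of Tn rt par dep TT M N f c y u x)"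
proof -
  have "stage_cost par dep M N f c y u x n \<le> eta_of Tn rt par dep TT M N f c y u x (par n)"
    if nT: "n \<in> Tn" and nr: "n \<noteq> rt" for n
  proof -
    have p: "par n \<in> Tn" "dep n = Suc (dep (par n))" using tree_facts(5)[OF tree nT nr] by auto
    have "dep n \<le> TT" using tree_facts(4)[OF tree nT] by auto
    then have nl: "par n \<notin> leaves Tn dep TT" using p unfolding leaves_def level_def by auto
    have ch: "n \<in> children Tn rt par (par n)" unfolding children_def using nT nr by auto
    have fin: "finite (children Tn rt par (par n))"
      using finite_subset[OF children_sub tree_facts(1)[OF tree]] .
    have "stage_cost par dep M N f c y u x n
        \<le> Max ((\<lambda>m. stage_cost par dep M N f c y u x m) ` children Tn rt par (par n))"
      using fin ch by (intro Max_ge) auto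
    then show ?thesis unfolding eta_of_def using nl by simp
  qed
  then show ?thesis unfolding feasible_RMS_def using xpos xcap by blast
qed

lemma stage_mono:
  fixes f :: "nat \<Rightarrow> nat \<Rightarrow> real"
  assumes f_nonneg: "\<And>t i. t \<in> {1..TT} \<Longrightarrow> i < M \<Longrightarrow> f t i \<ge> 0"
    and d: "dep m \<in> {1..TT}"
    and le: "\<And>i. i < M \<Longrightarrow> cumx par dep x m i \<le> cumx par dep x' m i"
  shows "stage_cost par dep M N f c y u x m \<le> stage_cost par dep M N f c y u x' m"
proof -
  have "(\<Sum>i<M. f (dep m) i * of_int (cumx par dep x m i)) \<le> (\<Sum>i<M. f (dep m) i * of_int (cumx par dep x' m i))"
  proof (rule sum_mono)
    fix i assume "i \<in> {..<M}"
    then have i: "i < M" by simp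
    show "f (dep m) i * of_int (cumx par dep x m i) \<le> f (dep m) i * of_int (cumx par dep x' m i)"
      using f_nonneg[OF d i] le[OF i] by (intro mult_left_mono) auto
  qed
  then show ?thesis unfolding stage_cost_def by linarith
qed

lemma obj_le:
  fixes f :: "nat \<Rightarrow> nat \<Rightarrow> real"
  assumes tree: "scenario_tree Tn rt par dep TT"
    and probs: "node_probs Tn rt par dep TT p"
    and f_nonneg: "\<And>t i. t \<in> {1..TT} \<Longrightarrow> i < M \<Longrightarrow> f t i \<ge> 0"
    and lam: "\<And>t. t \<in> {2..TT} \<Longrightarrow> 0 \<le> lam t \<and> lam t \<le> 1"
    and feas': "feasible_RMS Tn rt par dep M N f c h y u x' eta'"
    and le: "\<And>n i. n \<in> Tn \<Longrightarrow> i < M \<Longrightarrow> cumx par dep x n i \<le> cumx par dep x' n i"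
  shows "sp_obj Tn rt par dep TT M p f lam x (eta_of Tn rt par dep TT M N f c y u x)
       \<le> sp_obj Tn rt par dep TT M p f lam x' eta'"
  unfolding sp_obj_def
proof (rule sum_mono)
  fix n assume nT: "n \<in> Tn"
  have pp: "p n > 0" using probs nT unfolding node_probs_def by auto
  have dn: "1 \<le> dep n" "dep n \<le> TT" using tree_facts(4)[OF tree nT] by auto
  have A: "(\<Sum>i<M. ftil rt dep f lam n i * of_int (cumx par dep x n i))
        \<le> (\<Sum>i<M. ftil rt dep f lam n i * of_int (cumx par dep x' n i))"
  proof (rule sum_mono)
    fix i assume "i \<in> {..<M}"
    then have i: "i < M" by simp
    have "ftil rt dep f lam n i \<ge> 0"
    proof (cases "n = rt")
      case True
      then show ?thesis unfolding ftil_def using f_nonneg[OF _ i, of "dep n"] dn by auto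
    next
      case False
      then have "dep n = Suc (dep (par n))" "par n \<in> Tn" using tree_facts(5)[OF tree nT] by auto
      then have "dep n \<in> {2..TT}" using tree_facts(4)[OF tree, of "par n"] dn by auto
      then have "0 \<le> 1 - lam (dep n)" "0 \<le> f (dep n) i" using lam f_nonneg[OF _ i, of "dep n"] by auto
      then show ?thesis unfolding ftil_def using False by simp
    qed
    then show "ftil rt dep f lam n i * of_int (cumx par dep x n i) \<le> ftil rt dep f lam n i * of_int (cumx par dep x' n i)"
      using le[OF nT i] by (intro mult_left_mono) auto
  qed
  have B: "lamtil Tn dep TT lam n * eta_of Tn rt par dep TT M N f c y u x n \<le> lamtil Tn dep TT lam n * eta' n"
  proof (cases "n \<in> leaves Tn dep TT")
    case True
    then show ?thesis unfolding lamtil_def by simp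
  next
    case False
    then have lt: "dep n < TT" using nT dn unfolding leaves_def level_def by auto
    then have l0: "lamtil Tn dep TT lam n \<ge> 0" unfolding lamtil_def using False lam[of "Suc (dep n)"] dn by auto
    have fin: "finite (children Tn rt par n)"
      using finite_subset[OF children_sub tree_facts(1)[OF tree]] .
    have ne: "children Tn rt par n \<noteq> {}" using tree_facts(6)[OF tree nT lt] .
    have "Max ((\<lambda>m. stage_cost par dep M N f c y u x m) ` children Tn rt par n) \<le> eta' n"
    proof (subst Max_le_iff)
      show "finite ((\<lambda>m. stage_cost par dep M N f c y u x m) ` children Tn rt par n)" using fin by simp
      show "(\<lambda>m. stage_cost par dep M N f c y u x m) ` children Tn rt par n \<noteq> {}" using ne by simp
      show "\<forall>a\<in>(\<lambda>m. stage_cost par dep M N f c y u x m) ` children Tn rt par n. a \<le> eta' n"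
      proof
        fix a assume "a \<in> (\<lambda>m. stage_cost par dep M N f c y u x m) ` children Tn rt par n"
        then obtain m where m: "m \<in> children Tn rt par n" and a: "a = stage_cost par dep M N f c y u x m" by blast
        have mT: "m \<in> Tn" "m \<noteq> rt" "par m = n" using m unfolding children_def by auto
        have "dep m \<in> {1..TT}" using tree_facts(4)[OF tree mT(1)] by auto
        then have "a \<le> stage_cost par dep M N f c y u x' m"
          unfolding a
        proof (rule stage_mono[of TT M f, rotated])
          show "\<And>t i. t \<in> {1..TT} \<Longrightarrow> i < M \<Longrightarrow> f t i \<ge> 0" by (rule f_nonneg)
          show "\<And>i. i < M \<Longrightarrow> cumx par dep x m i \<le> cumx par dep x' m i" by (rule le[OF mT(1)])
        qed
        also have "\<dots> \<le> eta' n" using feas' mT unfolding feasible_RMS_def by blast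
        finally show "a \<le> eta' n" .
      qed
    qed
    then have "eta_of Tn rt par dep TT M N f c y u x n \<le> eta' n" unfolding eta_of_def using False by simp
    then show ?thesis using l0 by (intro mult_left_mono) auto
  qed
  show "p n * ((\<Sum>i<M. ftil rt dep f lam n i * of_int (cumx par dep x n i)) +
          lamtil Tn dep TT lam n * eta_of Tn rt par dep TT M N f c y u x n)
      \<le> p n * ((\<Sum>i<M. ftil rt dep f lam n i * of_int (cumx par dep x' n i)) +
          lamtil Tn dep TT lam n * eta' n)"
    using A B pp by (intro mult_left_mono) auto
qed




lemma lower_MS:
  assumes tree: "scenario_tree Tn rt par dep TT"
    and feas: "feasible_RMS Tn rt par dep M N f c h y u x' eta'"
    and nT: "n \<in> Tn" and i: "i < M"
  shows "Max ((\<lambda>m. \<lceil>Bmat h N (dep m) (y m) i\<rceil>) ` path par dep n) \<le> cumx par dep x' n i"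
proof (subst Max_le_iff)
  show "finite ((\<lambda>m. \<lceil>Bmat h N (dep m) (y m) i\<rceil>) ` path par dep n)"
    by (rule finite_imageI[OF path_finite])
  show "(\<lambda>m. \<lceil>Bmat h N (dep m) (y m) i\<rceil>) ` path par dep n \<noteq> {}"
    using path_props[OF tree nT] by blast
  have pos: "\<And>n. n \<in> Tn \<Longrightarrow> x' n i \<ge> 0" using feas i unfolding feasible_RMS_def by blast
  show "\<forall>a\<in>(\<lambda>m. \<lceil>Bmat h N (dep m) (y m) i\<rceil>) ` path par dep n. a \<le> cumx par dep x' n i"
  proof
    fix a assume "a \<in> (\<lambda>m. \<lceil>Bmat h N (dep m) (y m) i\<rceil>) ` path par dep n"
    then obtain m where m: "m \<in> path par dep n" and a: "a = \<lceil>Bmat h N (dep m) (y m) i\<rceil>" by blast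
    have mT: "m \<in> Tn" using path_props[OF tree nT] m by blast
    have "a \<le> cumx par dep x' m i" unfolding a ceiling_le_iff using feas mT i unfolding feasible_RMS_def by blast
    also have "\<dots> \<le> cumx par dep x' n i" using cumx_mono_path[of Tn rt par dep TT n x' i, OF tree nT pos] m by blast
    finally show "a \<le> cumx par dep x' n i" .
  qed
qed

lemma level_const:
  assumes tree: "scenario_tree Tn rt par dep TT"
    and feas: "feasible_RTS Tn rt par dep TT M N f c h y u x' eta'"
    and i: "i < M"
  shows "\<forall>n n'. n \<in> Tn \<longrightarrow> n' \<in> Tn \<longrightarrow> dep n = d \<longrightarrow> dep n' = d \<longrightarrow> cumx par dep x' n i = cumx par dep x' n' i"
proof (induction d)
  case 0
  then show ?case using tree_facts(4)[OF tree] by fastforce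
next
  case (Suc d)
  show ?case
  proof (intro allI impI)
    fix n n' assume nT: "n \<in> Tn" and n'T: "n' \<in> Tn" and dn: "dep n = Suc d" and dn': "dep n' = Suc d"
    have L1: "level Tn dep 1 = {rt}" by (rule level1[OF tree])
    show "cumx par dep x' n i = cumx par dep x' n' i"
    proof (cases "n = rt \<or> n' = rt")
      case True
      then have "Suc d = 1" using dn dn' tree_facts(3)[OF tree] by auto
      then have "n \<in> level Tn dep 1" "n' \<in> level Tn dep 1" using nT n'T dn dn' unfolding level_def by auto
      then show ?thesis using L1 by auto
    next
      case False
      then have nr: "n \<noteq> rt" "n' \<noteq> rt" by auto
      have p: "par n \<in> Tn" "dep (par n) = d" using tree_facts(5)[OF tree nT nr(1)] dn by auto
      have p': "par n' \<in> Tn" "dep (par n') = d" using tree_facts(5)[OF tree n'T nr(2)] dn' by auto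
      have "Suc d \<in> {1..TT}" using tree_facts(4)[OF tree nT] dn by auto
      moreover have "n \<in> level Tn dep (Suc d)" "n' \<in> level Tn dep (Suc d)" using nT n'T dn dn' unfolding level_def by auto
      ultimately have xe: "x' n i = x' n' i" using feas i unfolding feasible_RTS_def by blast
      have "cumx par dep x' (par n) i = cumx par dep x' (par n') i" using Suc.IH p p' by blast
      then show ?thesis using cumx_step[OF tree nT nr(1), of x' i] cumx_step[OF tree n'T nr(2), of x' i] xe by simp
    qed
  qed
qed

lemma lower_TS:
  assumes tree: "scenario_tree Tn rt par dep TT"
    and feas: "feasible_RTS Tn rt par dep TT M N f c h y u x' eta'"
    and nT: "n \<in> Tn" and i: "i < M"
  shows "Max ((\<lambda>m. \<lceil>Max ((\<lambda>l. Bmat h N (dep l) (y l) i) ` level Tn dep (dep m))\<rceil>) ` path par dep n)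
     \<le> cumx par dep x' n i"
proof (subst Max_le_iff)
  have feasM: "feasible_RMS Tn rt par dep M N f c h y u x' eta'" using feas unfolding feasible_RTS_def by blast
  show "finite ((\<lambda>m. \<lceil>Max ((\<lambda>l. Bmat h N (dep l) (y l) i) ` level Tn dep (dep m))\<rceil>) ` path par dep n)"
    by (rule finite_imageI[OF path_finite])
  show "(\<lambda>m. \<lceil>Max ((\<lambda>l. Bmat h N (dep l) (y l) i) ` level Tn dep (dep m))\<rceil>) ` path par dep n \<noteq> {}"
    using path_props[OF tree nT] by blast
  have pos: "\<And>n. n \<in> Tn \<Longrightarrow> x' n i \<ge> 0" using feasM i unfolding feasible_RMS_def by blast
  show "\<forall>a\<in>(\<lambda>m. \<lceil>Max ((\<lambda>l. Bmat h N (dep l) (y l) i) ` level Tn dep (dep m))\<rceil>) ` path par dep n. a \<le> cumx par dep x' n i"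
  proof
    fix a assume "a \<in> (\<lambda>m. \<lceil>Max ((\<lambda>l. Bmat h N (dep l) (y l) i) ` level Tn dep (dep m))\<rceil>) ` path par dep n"
    then obtain m where m: "m \<in> path par dep n" and a: "a = \<lceil>Max ((\<lambda>l. Bmat h N (dep l) (y l) i) ` level Tn dep (dep m))\<rceil>" by blast
    have mT: "m \<in> Tn" using path_props[OF tree nT] m by blast
    have fl: "finite (level Tn dep (dep m))" using tree_facts(1)[OF tree] unfolding level_def by auto
    have ml: "m \<in> level Tn dep (dep m)" using mT unfolding level_def by auto
    have "Max ((\<lambda>l. Bmat h N (dep l) (y l) i) ` level Tn dep (dep m)) \<le> of_int (cumx par dep x' m i)"
    proof (subst Max_le_iff)
      show "finite ((\<lambda>l. Bmat h N (dep l) (y l) i) ` level Tn dep (dep m))" using fl by simp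
      show "(\<lambda>l. Bmat h N (dep l) (y l) i) ` level Tn dep (dep m) \<noteq> {}" using ml by blast
      show "\<forall>b\<in>(\<lambda>l. Bmat h N (dep l) (y l) i) ` level Tn dep (dep m). b \<le> of_int (cumx par dep x' m i)"
      proof
        fix b assume "b \<in> (\<lambda>l. Bmat h N (dep l) (y l) i) ` level Tn dep (dep m)"
        then obtain l where l: "l \<in> level Tn dep (dep m)" and b: "b = Bmat h N (dep l) (y l) i" by blast
        have lT: "l \<in> Tn" "dep l = dep m" using l unfolding level_def by auto
        have "b \<le> of_int (cumx par dep x' l i)" unfolding b using feasM lT i unfolding feasible_RMS_def by blast
        also have "cumx par dep x' l i = cumx par dep x' m i"
          using level_const[OF tree feas i, of "dep m"] lT mT by blast
        finally show "b \<le> of_int (cumx par dep x' m i)" .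
      qed
    qed
    then have "a \<le> cumx par dep x' m i" unfolding a ceiling_le_iff .
    also have "\<dots> \<le> cumx par dep x' n i" using cumx_mono_path[of Tn rt par dep TT n x' i, OF tree nT pos] m by blast
    finally show "a \<le> cumx par dep x' n i" .
  qed
qed

lemma xTS_level:
  assumes tree: "scenario_tree Tn rt par dep TT"
    and m: "m \<in> level Tn dep t" and n: "n \<in> level Tn dep t"
  shows "xTS Tn rt par dep h N y m i = xTS Tn rt par dep h N y n i"
proof -
  define g where "g s = \<lceil>Max ((\<lambda>l. Bmat h N (dep l) (y l) i) ` level Tn dep s)\<rceil>" for s
  have img: "(\<lambda>m. \<lceil>Max ((\<lambda>l. Bmat h N (dep l) (y l) i) ` level Tn dep (dep m))\<rceil>) ` P = g ` (dep ` P)" for P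
    unfolding g_def by (simp add: image_image)
  have form: "xTS Tn rt par dep h N y k i = Max (g ` {1..t}) - Max (g ` {1..t - 1})"
    if k: "k \<in> level Tn dep t" and kr: "k \<noteq> rt" for k
  proof -
    have kT: "k \<in> Tn" "dep k = t" using k unfolding level_def by auto
    have p: "par k \<in> Tn" "dep k = Suc (dep (par k))" using tree_facts(5)[OF tree kT(1) kr] by auto
    have "xTS Tn rt par dep h N y k i = Max (g ` (dep ` path par dep k)) - Max (g ` (dep ` path par dep (par k)))"
      unfolding xTS_def img using kr by simp
    also have "\<dots> = Max (g ` {1..dep k}) - Max (g ` {1..dep (par k)})"
      using path_props[OF tree kT(1)] path_props[OF tree p(1)] by simp
    moreover have "dep (par k) = t - 1" using kT p by simp
    ultimately show ?thesis using kT by simp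
  qed
  show ?thesis
  proof (cases "t = 1")
    case True
    then show ?thesis using m n level1[OF tree] by auto
  next
    case False
    then have "m \<noteq> rt" "n \<noteq> rt" using m n tree_facts(3)[OF tree] unfolding level_def by auto
    then show ?thesis using form m n by simp
  qed
qed




theorem proposition2:
  fixes Tn :: "'a set" and rt :: 'a and par :: "'a \<Rightarrow> 'a" and dep :: "'a \<Rightarrow> nat"
    and TT M N :: nat and p :: "'a \<Rightarrow> real"
    and f :: "nat \<Rightarrow> nat \<Rightarrow> real" and c :: "nat \<Rightarrow> nat \<Rightarrow> nat \<Rightarrow> real"
    and h :: "nat \<Rightarrow> nat \<Rightarrow> real" and lam alpha :: "nat \<Rightarrow> real"
    and y :: "'a \<Rightarrow> nat \<Rightarrow> nat \<Rightarrow> real" and u :: "'a \<Rightarrow> real"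
  assumes "TT \<ge> 2" and "M \<ge> 1" and "N \<ge> 1"
    and tree: "scenario_tree Tn rt par dep TT"
    and probs: "node_probs Tn rt par dep TT p"
    and f_nonneg: "\<And>t i. t \<in> {1..TT} \<Longrightarrow> i < M \<Longrightarrow> f t i \<ge> 0"
    and c_nonneg: "\<And>t i j. t \<in> {1..TT} \<Longrightarrow> i < M \<Longrightarrow> j < N \<Longrightarrow> c t i j \<ge> 0"
    and h_pos: "\<And>t i. t \<in> {1..TT} \<Longrightarrow> i < M \<Longrightarrow> h t i > 0"
    and lam: "\<And>t. t \<in> {2..TT} \<Longrightarrow> 0 \<le> lam t \<and> lam t \<le> 1"
    and alpha: "\<And>t. t \<in> {2..TT} \<Longrightarrow> 0 < alpha t \<and> alpha t < 1"
    and y_nonneg: "\<And>n i j. n \<in> Tn \<Longrightarrow> i < M \<Longrightarrow> j < N \<Longrightarrow> y n i j \<ge> 0"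
  shows "optimal_RMS Tn rt par dep TT M N p f c h lam y u
           (xMS rt par dep h N y)
           (eta_of Tn rt par dep TT M N f c y u (xMS rt par dep h N y))
       \<and> optimal_RTS Tn rt par dep TT M N p f c h lam y u
           (xTS Tn rt par dep h N y)
           (eta_of Tn rt par dep TT M N f c y u (xTS Tn rt par dep h N y))
       \<and> QM Tn rt par dep TT M N p f c h lam y u
           = sp_obj Tn rt par dep TT M p f lam (xMS rt par dep h N y)
               (eta_of Tn rt par dep TT M N f c y u (xMS rt par dep h N y))
       \<and> QT Tn rt par dep TT M N p f c h lam y u
           = sp_obj Tn rt par dep TT M p f lam (xTS Tn rt par dep h N y)
               (eta_of Tn rt par dep TT M N f c y u (xTS Tn rt par dep h N y))"
proof -
  define xm where "xm = xMS rt par dep h N y"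
  define xt where "xt = xTS Tn rt par dep h N y"
  define em where "em = eta_of Tn rt par dep TT M N f c y u xm"
  define et where "et = eta_of Tn rt par dep TT M N f c y u xt"
  have Bnn: "Bmat h N (dep n) (y n) i \<ge> 0" if nT: "n \<in> Tn" and i: "i < M" for n i
  proof -
    have "dep n \<in> {1..TT}" using tree_facts(4)[OF tree nT] by auto
    then have "h (dep n) i > 0" using h_pos i by blast
    moreover have "(\<Sum>j<N. y n i j) \<ge> 0" using y_nonneg[OF nT i] by (intro sum_nonneg) auto
    ultimately show ?thesis unfolding Bmat_def by simp
  qed
  have cumM: "cumx par dep xm n i = Max ((\<lambda>m. \<lceil>Bmat h N (dep m) (y m) i\<rceil>) ` path par dep n) \<and> xm n i \<ge> 0"
    if nT: "n \<in> Tn" and i: "i < M" for n i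
  proof (rule gen_cum[OF tree _ _ nT])
    show "\<And>n. n \<in> Tn \<Longrightarrow> xm n i = (if n = rt then \<lceil>Bmat h N (dep n) (y n) i\<rceil>
        else Max ((\<lambda>m. \<lceil>Bmat h N (dep m) (y m) i\<rceil>) ` path par dep n) - Max ((\<lambda>m. \<lceil>Bmat h N (dep m) (y m) i\<rceil>) ` path par dep (par n)))"
      unfolding xm_def xMS_def by simp
    show "0 \<le> \<lceil>Bmat h N (dep n) (y n) i\<rceil>" if a: "n \<in> Tn" for n
    proof -
      have "0 \<le> Bmat h N (dep n) (y n) i" by (rule Bnn[OF a i])
      then show ?thesis by simp
    qed
  qed
  have xmpos: "\<forall>n\<in>Tn. \<forall>i<M. xm n i \<ge> 0" using cumM by blast
  have xmcap: "\<forall>n\<in>Tn. \<forall>i<M. of_int (cumx par dep xm n i) \<ge> Bmat h N (dep n) (y n) i"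
  proof (intro ballI allI impI)
    fix n i assume nT: "n \<in> Tn" and i: "i < M"
    have "\<lceil>Bmat h N (dep n) (y n) i\<rceil> \<le> Max ((\<lambda>m. \<lceil>Bmat h N (dep m) (y m) i\<rceil>) ` path par dep n)"
      using path_props[OF tree nT] by (intro Max_ge finite_imageI path_finite) auto
    then have "\<lceil>Bmat h N (dep n) (y n) i\<rceil> \<le> cumx par dep xm n i" using cumM[OF nT i] by simp
    then show "of_int (cumx par dep xm n i) \<ge> Bmat h N (dep n) (y n) i"
      by (meson le_of_int_ceiling of_int_le_iff order_trans)
  qed
  have feasM: "feasible_RMS Tn rt par dep M N f c h y u xm em"
    unfolding em_def by (rule feas_eta[OF tree xmpos xmcap])
  have optM: "sp_obj Tn rt par dep TT M p f lam xm em \<le> sp_obj Tn rt par dep TT M p f lam x' eta'"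
    if F: "feasible_RMS Tn rt par dep M N f c h y u x' eta'" for x' eta'
    unfolding em_def
  proof (rule obj_le[OF tree probs f_nonneg lam F])
    fix n i assume nT: "n \<in> Tn" and i: "i < M"
    show "cumx par dep xm n i \<le> cumx par dep x' n i"
      using cumM[OF nT i] lower_MS[OF tree F nT i] by simp
  qed
  have cumT: "cumx par dep xt n i = Max ((\<lambda>m. \<lceil>Max ((\<lambda>l. Bmat h N (dep l) (y l) i) ` level Tn dep (dep m))\<rceil>) ` path par dep n) \<and> xt n i \<ge> 0"
    if nT: "n \<in> Tn" and i: "i < M" for n i
  proof (rule gen_cum[OF tree _ _ nT])
    have L: "level Tn dep (dep rt) = {rt}" using level1[OF tree] tree_facts(3)[OF tree] by simp
    show "\<And>n. n \<in> Tn \<Longrightarrow> xt n i = (if n = rt then \<lceil>Max ((\<lambda>l. Bmat h N (dep l) (y l) i) ` level Tn dep (dep n))\<rceil>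
        else Max ((\<lambda>m. \<lceil>Max ((\<lambda>l. Bmat h N (dep l) (y l) i) ` level Tn dep (dep m))\<rceil>) ` path par dep n)
           - Max ((\<lambda>m. \<lceil>Max ((\<lambda>l. Bmat h N (dep l) (y l) i) ` level Tn dep (dep m))\<rceil>) ` path par dep (par n)))"
      unfolding xt_def xTS_def using L by simp
    show "0 \<le> \<lceil>Max ((\<lambda>l. Bmat h N (dep l) (y l) i) ` level Tn dep (dep n))\<rceil>" if nT': "n \<in> Tn" for n
    proof -
      have fl: "finite (level Tn dep (dep n))" using tree_facts(1)[OF tree] unfolding level_def by auto
      have nl: "n \<in> level Tn dep (dep n)" using nT' unfolding level_def by auto
      have "Bmat h N (dep n) (y n) i \<le> Max ((\<lambda>l. Bmat h N (dep l) (y l) i) ` level Tn dep (dep n))"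
        using fl nl by (intro Max_ge) auto
      then show ?thesis using Bnn[OF nT' i] by simp
    qed
  qed
  have xtpos: "\<forall>n\<in>Tn. \<forall>i<M. xt n i \<ge> 0" using cumT by blast
  have xtcap: "\<forall>n\<in>Tn. \<forall>i<M. of_int (cumx par dep xt n i) \<ge> Bmat h N (dep n) (y n) i"
  proof (intro ballI allI impI)
    fix n i assume nT: "n \<in> Tn" and i: "i < M"
    have fl: "finite (level Tn dep (dep n))" using tree_facts(1)[OF tree] unfolding level_def by auto
    have nl: "n \<in> level Tn dep (dep n)" using nT unfolding level_def by auto
    have a: "Bmat h N (dep n) (y n) i \<le> Max ((\<lambda>l. Bmat h N (dep l) (y l) i) ` level Tn dep (dep n))"
      using fl nl by (intro Max_ge) auto
    have "\<lceil>Max ((\<lambda>l. Bmat h N (dep l) (y l) i) ` level Tn dep (dep n))\<rceil>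
        \<le> Max ((\<lambda>m. \<lceil>Max ((\<lambda>l. Bmat h N (dep l) (y l) i) ` level Tn dep (dep m))\<rceil>) ` path par dep n)"
      using path_props[OF tree nT] by (intro Max_ge finite_imageI path_finite) auto
    then have "\<lceil>Max ((\<lambda>l. Bmat h N (dep l) (y l) i) ` level Tn dep (dep n))\<rceil> \<le> cumx par dep xt n i"
      using cumT[OF nT i] by simp
    then show "of_int (cumx par dep xt n i) \<ge> Bmat h N (dep n) (y n) i"
      using a by (meson le_of_int_ceiling of_int_le_iff order_trans)
  qed
  have feasTM: "feasible_RMS Tn rt par dep M N f c h y u xt et"
    unfolding et_def by (rule feas_eta[OF tree xtpos xtcap])
  have feasT: "feasible_RTS Tn rt par dep TT M N f c h y u xt et"
    unfolding feasible_RTS_def using feasTM xTS_level[OF tree] unfolding xt_def by blast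
  have optT: "sp_obj Tn rt par dep TT M p f lam xt et \<le> sp_obj Tn rt par dep TT M p f lam x' eta'"
    if F: "feasible_RTS Tn rt par dep TT M N f c h y u x' eta'" for x' eta'
    unfolding et_def
  proof (rule obj_le[OF tree probs f_nonneg lam])
    show "feasible_RMS Tn rt par dep M N f c h y u x' eta'" using F unfolding feasible_RTS_def by blast
    fix n i assume nT: "n \<in> Tn" and i: "i < M"
    show "cumx par dep xt n i \<le> cumx par dep x' n i"
      using cumT[OF nT i] lower_TS[OF tree F nT i] by simp
  qed
  have A: "optimal_RMS Tn rt par dep TT M N p f c h lam y u xm em"
    unfolding optimal_RMS_def using feasM optM by blast
  have B: "optimal_RTS Tn rt par dep TT M N p f c h lam y u xt et"
    unfolding optimal_RTS_def using feasT optT by blast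
  have C: "QM Tn rt par dep TT M N p f c h lam y u = sp_obj Tn rt par dep TT M p f lam xm em"
    unfolding QM_def
  proof (rule cInf_eq_minimum)
    show "sp_obj Tn rt par dep TT M p f lam xm em \<in> {sp_obj Tn rt par dep TT M p f lam x eta |x eta.
            feasible_RMS Tn rt par dep M N f c h y u x eta}" using feasM by blast
    fix z assume "z \<in> {sp_obj Tn rt par dep TT M p f lam x eta |x eta.
            feasible_RMS Tn rt par dep M N f c h y u x eta}"
    then show "sp_obj Tn rt par dep TT M p f lam xm em \<le> z" using optM by blast
  qed
  have D: "QT Tn rt par dep TT M N p f c h lam y u = sp_obj Tn rt par dep TT M p f lam xt et"
    unfolding QT_def
  proof (rule cInf_eq_minimum)
    show "sp_obj Tn rt par dep TT M p f lam xt et \<in> {sp_obj Tn rt par dep TT M p f lam x eta |x eta.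
            feasible_RTS Tn rt par dep TT M N f c h y u x eta}" using feasT by blast
    fix z assume "z \<in> {sp_obj Tn rt par dep TT M p f lam x eta |x eta.
            feasible_RTS Tn rt par dep TT M N f c h y u x eta}"
    then show "sp_obj Tn rt par dep TT M p f lam xt et \<le> z" using optT by blast
  qed
  show ?thesis using A B C D unfolding xm_def xt_def em_def et_def by blast
qed


end
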